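(* Let $x_0\in\mathbb{R}^2$, $r_0>0$, and let $E$ be a relatively closed subset of $B(x_0,r_0)$ such that $x_0\in E$ and $E$ separates $B(x_0,r_0)$. Assume there exists a constant $C_0\ge1$ such that $\mathcal{H}^1(E\cap B(x,r))\ge C_0^{-1}r$ for all $x\in E$ and $r>0$ with $B(x,r)\subset B(x_0,r_0)$. Suppose also that $\overline{E}\cap\partial B(x_0,r_0)$ consists of exactly two points $p$ and $q$ with $|p-q|\ge r_0$. Then $$\beta_E(x_0,r_0/2)^2\le64C_0r_0^{-1}\big(\mathcal{H}^1(E)-|p-q|\big).$$
   Context: $B(x,r)$ is the open ball. $\beta_E(x,r)=r^{-1}\inf_\ell\sup_{y\in E\cap B(x,r)}\mathrm{dist}(y,\ell)$, infimum over lines through $x$ (attained); with $\nu$ a unit normal of a minimizing line and $D^\pm_t=\{z\in B(x_0,r_0):\pm(z-x_0)\cdot\nu>t\}$, $E$ separates $B(x_0,r_0)$ if $\beta:=\beta_E(x_0,r_0)\le1/2$ and $D^+_{\beta r_0}$, $D^-_{\beta r_0}$ lie in distinct connected components of $B(x_0,r_0)\setminus E$. *)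

theory Defs
  imports "HOL-Analysis.Analysis"
begin

type_synonym R2 = "real ^ 2"

definition hausdorff_pre1 :: "real \<Rightarrow> 'a::metric_space set \<Rightarrow> ennreal" where
  "hausdorff_pre1 \<delta> A =
     (INF U \<in> {U :: nat \<Rightarrow> 'a set. A \<subseteq> (\<Union>i. U i) \<and>
                 (\<forall>i. bounded (U i) \<and> diameter (U i) \<le> \<delta>)}.
        (\<Sum>i. ennreal (diameter (U i))))"

definition H1 :: "'a::metric_space set \<Rightarrow> ennreal" where
  "H1 A = (SUP \<delta> \<in> {0<..}. hausdorff_pre1 \<delta> A)"

definition line_normal :: "R2 \<Rightarrow> R2 \<Rightarrow> R2 set" where
  "line_normal x \<nu> = {z. inner (z - x) \<nu> = 0}"

definition width :: "R2 set \<Rightarrow> R2 \<Rightarrow> real \<Rightarrow> R2 \<Rightarrow> real" where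
  "width E x r \<nu> = Sup (insert 0 ((\<lambda>y. infdist y (line_normal x \<nu>)) ` (E \<inter> ball x r)))"

definition beta :: "R2 set \<Rightarrow> R2 \<Rightarrow> real \<Rightarrow> real" where
  "beta E x r = (INF \<nu> \<in> {\<nu>. norm \<nu> = 1}. width E x r \<nu>) / r"

definition halfdisc :: "R2 \<Rightarrow> real \<Rightarrow> R2 \<Rightarrow> real \<Rightarrow> R2 set" where
  "halfdisc x r \<nu> t = {z \<in> ball x r. inner (z - x) \<nu> > t}"

definition separates :: "R2 set \<Rightarrow> R2 \<Rightarrow> real \<Rightarrow> bool" where
  "separates E x r \<longleftrightarrow> beta E x r \<le> 1/2 \<and>
     (\<exists>\<nu>. norm \<nu> = 1 \<and> width E x r \<nu> = r * beta E x r \<and>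
        (\<exists>C1 \<in> components (ball x r - E). \<exists>C2 \<in> components (ball x r - E).
           C1 \<noteq> C2 \<and> halfdisc x r \<nu> (beta E x r * r) \<subseteq> C1 \<and>
           halfdisc x r (- \<nu>) (beta E x r * r) \<subseteq> C2))"

end

theory Submission
  imports Defs
begin


lemma pre_mono_set:
  assumes "A \<subseteq> B" shows "hausdorff_pre1 \<delta> A \<le> hausdorff_pre1 \<delta> B"
  unfolding hausdorff_pre1_def
  by (rule INF_superset_mono) (use assms in auto)

lemma pre_mono_delta:
  assumes "\<delta> \<le> \<delta>'" shows "hausdorff_pre1 \<delta>' A \<le> hausdorff_pre1 \<delta> A"
  unfolding hausdorff_pre1_def
  by (rule INF_superset_mono) (auto intro: order_trans[OF _ assms])

lemma pre_le_H1:
  assumes "\<delta> > 0" shows "hausdorff_pre1 \<delta> A \<le> H1 A"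
  unfolding H1_def by (rule SUP_upper) (use assms in auto)

lemma eilenberg:
  fixes f :: "'a::metric_space \<Rightarrow> real"
  assumes lip: "\<And>x y. \<bar>f x - f y\<bar> \<le> dist x y"
    and cov: "\<And>t. a < t \<Longrightarrow> t < b \<Longrightarrow> \<exists>z\<in>A. f z = t"
    and ab: "a \<le> b"
  shows "ennreal (b - a) \<le> hausdorff_pre1 \<delta> A"
  unfolding hausdorff_pre1_def
proof (rule INF_greatest)
  fix U assume "U \<in> {U :: nat \<Rightarrow> 'a set. A \<subseteq> (\<Union>i. U i) \<and>
                 (\<forall>i. bounded (U i) \<and> diameter (U i) \<le> \<delta>)}"
  then have AU: "A \<subseteq> (\<Union>i. U i)" and bd: "\<And>i. bounded (U i)" by auto
  define J where "J i = (if U i = {} then {} else {Inf (f ` U i) .. Inf (f ` U i) + diameter (U i)})" for i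
  have fJ: "f ` U i \<subseteq> J i" for i
  proof (cases "U i = {}")
    case True then show ?thesis by simp
  next
    case False
    have dd: "\<bar>f x - f y\<bar> \<le> diameter (U i)" if "x \<in> U i" "y \<in> U i" for x y
      using lip[of x y] diameter_bounded_bound[OF bd that] by linarith
    obtain x0 where x0: "x0 \<in> U i" using False by auto
    have bb: "bdd_below (f ` U i)"
      by (rule bdd_belowI[of _ "f x0 - diameter (U i)"]) (use dd x0 in force)
    show ?thesis
    proof
      fix t assume "t \<in> f ` U i"
      then obtain x where x: "x \<in> U i" "t = f x" by auto
      have "Inf (f ` U i) \<le> t" using x bb by (simp add: cInf_lower)
      moreover have "f x - diameter (U i) \<le> Inf (f ` U i)"
        using False by (intro cInf_greatest) (use dd x in force)+
      ultimately show "t \<in> J i" using False x by (simp add: J_def)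
    qed
  qed
  have mJ: "emeasure lborel (J i) \<le> ennreal (diameter (U i))" for i
    by (simp add: J_def diameter_ge_0[OF bd])
  have "{a<..<b} \<subseteq> (\<Union>i. J i)"
  proof
    fix t assume "t \<in> {a<..<b}"
    then obtain z where "z \<in> A" "f z = t" using cov by auto
    then obtain i where "z \<in> U i" using AU by auto
    then show "t \<in> (\<Union>i. J i)" using fJ \<open>f z = t\<close> by blast
  qed
  then have "emeasure lborel {a<..<b} \<le> emeasure lborel (\<Union>i. J i)"
    by (intro emeasure_mono) (auto simp: J_def)
  also have "\<dots> \<le> (\<Sum>i. emeasure lborel (J i))"
    by (rule emeasure_subadditive_countably) (auto simp: J_def)
  also have "\<dots> \<le> (\<Sum>i. ennreal (diameter (U i)))"
    by (intro suminf_le mJ) auto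
  finally show "ennreal (b - a) \<le> (\<Sum>i. ennreal (diameter (U i)))"
    using ab by simp
qed


lemma split3:
  assumes d0: "\<delta> \<ge> 0"
    and s12: "\<And>x y. x \<in> R1 \<Longrightarrow> y \<in> R2 \<Longrightarrow> \<delta> < dist x y"
    and s13: "\<And>x y. x \<in> R1 \<Longrightarrow> y \<in> R3 \<Longrightarrow> \<delta> < dist x y"
    and s23: "\<And>x y. x \<in> R2 \<Longrightarrow> y \<in> R3 \<Longrightarrow> \<delta> < dist x y"
  shows "hausdorff_pre1 \<delta> (A \<inter> R1) + hausdorff_pre1 \<delta> (A \<inter> R2) + hausdorff_pre1 \<delta> (A \<inter> R3)
          \<le> hausdorff_pre1 \<delta> (A::'a::metric_space set)"
  unfolding hausdorff_pre1_def[of \<delta> A]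
proof (rule INF_greatest)
  fix U assume "U \<in> {U :: nat \<Rightarrow> 'a set. A \<subseteq> (\<Union>i. U i) \<and>
                 (\<forall>i. bounded (U i) \<and> diameter (U i) \<le> \<delta>)}"
  then have AU: "A \<subseteq> (\<Union>i. U i)" and bd: "\<And>i. bounded (U i)" and dU: "\<And>i. diameter (U i) \<le> \<delta>" by auto
  define V where "V R i = (if U i \<inter> (A \<inter> R) = {} then {} else U i)" for R i
  have adm: "hausdorff_pre1 \<delta> (A \<inter> R) \<le> (\<Sum>i. ennreal (diameter (V R i)))" for R
    unfolding hausdorff_pre1_def
  proof (rule INF_lower)
    show "V R \<in> {U. A \<inter> R \<subseteq> (\<Union>i. U i) \<and> (\<forall>i. bounded (U i) \<and> diameter (U i) \<le> \<delta>)}"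
    proof (intro CollectI conjI allI)
      show "A \<inter> R \<subseteq> (\<Union>i. V R i)"
      proof
        fix x assume x: "x \<in> A \<inter> R"
        then obtain i where "x \<in> U i" using AU by blast
        then have "x \<in> V R i" using x by (auto simp: V_def)
        then show "x \<in> (\<Union>i. V R i)" by blast
      qed
      fix i
      show "bounded (V R i)" using bd[of i] by (simp add: V_def)
      show "diameter (V R i) \<le> \<delta>" using dU[of i] d0 by (simp add: V_def)
    qed
  qed
  have close: "dist x y \<le> \<delta>" if "x \<in> U i" "y \<in> U i" for x y i
    using diameter_bounded_bound[OF bd that] dU[of i] by linarith
  have pt: "ennreal (diameter (V R1 i)) + ennreal (diameter (V R2 i)) + ennreal (diameter (V R3 i))
      \<le> ennreal (diameter (U i))" for i
  proof -
    have no2: "U i \<inter> (A \<inter> Ra) = {} \<or> U i \<inter> (A \<inter> Rb) = {}"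
      if "\<And>x y. x\<in>Ra \<Longrightarrow> y\<in>Rb \<Longrightarrow> \<delta> < dist x y" for Ra Rb
    proof (rule ccontr)
      assume "\<not> ?thesis"
      then obtain x y where "x \<in> U i" "x \<in> Ra" "y \<in> U i" "y \<in> Rb" by auto
      with close[of x i y] that[of x y] show False by linarith
    qed
    have n12: "U i \<inter> (A \<inter> R1) = {} \<or> U i \<inter> (A \<inter> R2) = {}" by (rule no2[OF s12])
    have n13: "U i \<inter> (A \<inter> R1) = {} \<or> U i \<inter> (A \<inter> R3) = {}" by (rule no2[OF s13])
    have n23: "U i \<inter> (A \<inter> R2) = {} \<or> U i \<inter> (A \<inter> R3) = {}" by (rule no2[OF s23])
    have e: "U i \<inter> (A \<inter> R) = {} \<Longrightarrow> V R i = {}" "U i \<inter> (A \<inter> R) \<noteq> {} \<Longrightarrow> V R i = U i" for R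
      by (simp_all add: V_def)
    show ?thesis
    proof (cases "U i \<inter> (A \<inter> R1) = {}")
      case c1: True
      show ?thesis
      proof (cases "U i \<inter> (A \<inter> R2) = {}")
        case True
        then show ?thesis using c1 e[of R1] e[of R2] e[of R3]
          by (cases "U i \<inter> (A \<inter> R3) = {}") simp_all
      next
        case False
        then have "U i \<inter> (A \<inter> R3) = {}" using n23 by blast
        then show ?thesis using c1 False e[of R1] e[of R2] e[of R3] by simp
      qed
    next
      case False
      then have "U i \<inter> (A \<inter> R2) = {}" "U i \<inter> (A \<inter> R3) = {}" using n12 n13 by blast+
      then show ?thesis using False e[of R1] e[of R2] e[of R3] by simp
    qed
  qed
  have "hausdorff_pre1 \<delta> (A \<inter> R1) + hausdorff_pre1 \<delta> (A \<inter> R2) + hausdorff_pre1 \<delta> (A \<inter> R3)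
     \<le> (\<Sum>i. ennreal (diameter (V R1 i))) + (\<Sum>i. ennreal (diameter (V R2 i))) + (\<Sum>i. ennreal (diameter (V R3 i)))"
    by (intro add_mono adm)
  also have "\<dots> = (\<Sum>i. ennreal (diameter (V R1 i)) + ennreal (diameter (V R2 i)) + ennreal (diameter (V R3 i)))"
    by (simp add: suminf_add[OF summableI summableI] summableI)
  also have "\<dots> \<le> (\<Sum>i. ennreal (diameter (U i)))"
    by (intro suminf_le pt) auto
  finally show "hausdorff_pre1 \<delta> (A \<inter> R1) + hausdorff_pre1 \<delta> (A \<inter> R2) + hausdorff_pre1 \<delta> (A \<inter> R3)
     \<le> (\<Sum>i. ennreal (diameter (U i)))" .
qed

lemma H1_split:
  assumes g: "g > 0"
    and s12: "\<And>x y. x \<in> R1 \<Longrightarrow> y \<in> R2 \<Longrightarrow> g \<le> dist x y"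
    and s13: "\<And>x y. x \<in> R1 \<Longrightarrow> y \<in> R3 \<Longrightarrow> g \<le> dist x y"
    and s23: "\<And>x y. x \<in> R2 \<Longrightarrow> y \<in> R3 \<Longrightarrow> g \<le> dist x y"
    and x1: "\<And>\<delta>. \<delta> > 0 \<Longrightarrow> x1 \<le> hausdorff_pre1 \<delta> (A \<inter> R1)"
    and x2: "\<And>\<delta>. \<delta> > 0 \<Longrightarrow> x2 \<le> hausdorff_pre1 \<delta> (A \<inter> R2)"
  shows "x1 + x2 + H1 (A \<inter> R3) \<le> H1 (A::'a::metric_space set)"
proof -
  have "x1 + x2 + H1 (A \<inter> R3) = (SUP \<delta>\<in>{0<..}. x1 + x2 + hausdorff_pre1 \<delta> (A \<inter> R3))"
    unfolding H1_def by (rule ennreal_SUP_add_right) auto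
  also have "\<dots> \<le> H1 A"
  proof (rule SUP_least)
    fix \<delta> :: real assume "\<delta> \<in> {0<..}"
    define d where "d = min \<delta> (g/2)"
    have d: "d > 0" "d \<le> \<delta>" "d < g" using \<open>\<delta> \<in> {0<..}\<close> g by (auto simp: d_def)
    have "x1 + x2 + hausdorff_pre1 \<delta> (A \<inter> R3) \<le> hausdorff_pre1 d (A \<inter> R1) + hausdorff_pre1 d (A \<inter> R2) + hausdorff_pre1 d (A \<inter> R3)"
      by (intro add_mono x1 x2 pre_mono_delta d)
    also have "\<dots> \<le> hausdorff_pre1 d A"
      by (rule split3) (use d in simp, (meson d(3) s12 s13 s23 less_le_trans)+)
    also have "\<dots> \<le> H1 A" by (rule pre_le_H1) (use d in auto)
    finally show "x1 + x2 + hausdorff_pre1 \<delta> (A \<inter> R3) \<le> H1 A" .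
  qed
  finally show ?thesis .
qed


definition rot :: "R2 \<Rightarrow> R2" where "rot x = (\<chi> i. if i = 1 then - x$2 else x$1)"

lemma rot_nth[simp]: "rot x $ 1 = - x$2" "rot x $ 2 = x$1"
  by (simp_all add: rot_def)

lemma inner_2: "inner (x::R2) y = x$1*y$1 + x$2*y$2"
  by (simp add: inner_vec_def sum_2)

lemma norm_2: "(norm (x::R2))\<^sup>2 = (x$1)\<^sup>2 + (x$2)\<^sup>2"
  unfolding power2_norm_eq_inner by (simp add: inner_2 power2_eq_square)

lemma inner_rot_rot[simp]: "inner (rot x) (rot y) = inner x y"
  by (simp add: inner_2 algebra_simps)

lemma inner_rot_self[simp]: "inner x (rot x) = 0" "inner (rot x) x = 0"
  by (simp_all add: inner_2 algebra_simps)

lemma norm_rot[simp]: "norm (rot x) = norm x"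
  by (metis inner_rot_rot norm_eq_sqrt_inner)

lemma rot_linear: "rot (a *\<^sub>R x + b *\<^sub>R y) = a *\<^sub>R rot x + b *\<^sub>R rot y" "rot (x - y) = rot x - rot y"
  "rot (- x) = - rot x" "rot (a *\<^sub>R x) = a *\<^sub>R rot x"
  by (simp_all add: vec_eq_iff forall_2 algebra_simps)

lemma inner_rot_swap: "inner (rot x) y = - inner x (rot y)"
  by (simp add: inner_2 algebra_simps)

lemma decomp:
  assumes "norm u = 1"
  shows "z = inner z u *\<^sub>R u + inner z (rot u) *\<^sub>R rot u"
proof -
  have u: "(u$1)\<^sup>2 + (u$2)\<^sup>2 = 1" using assms norm_2[of u] by simp
  have e1: "(z$1*u$1 + z$2*u$2)*u$1 + (z$1*(-u$2) + z$2*u$1)*(-u$2) = z$1 * ((u$1)\<^sup>2+(u$2)\<^sup>2)"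
    by (simp add: algebra_simps power2_eq_square)
  have e2: "(z$1*u$1 + z$2*u$2)*u$2 + (z$1*(-u$2) + z$2*u$1)*(u$1) = z$2 * ((u$1)\<^sup>2+(u$2)\<^sup>2)"
    by (simp add: algebra_simps power2_eq_square)
  show ?thesis
    unfolding vec_eq_iff forall_2 using e1 e2 u by (simp add: inner_2)
qed

lemma pyth:
  assumes "norm u = 1"
  shows "(norm z)\<^sup>2 = (inner z u)\<^sup>2 + (inner z (rot u))\<^sup>2"
proof -
  have u: "(u$1)\<^sup>2 + (u$2)\<^sup>2 = 1" using assms norm_2[of u] by simp
  have "(inner z u)\<^sup>2 + (inner z (rot u))\<^sup>2 = ((z$1)\<^sup>2+(z$2)\<^sup>2)*((u$1)\<^sup>2+(u$2)\<^sup>2)"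
    by (simp add: inner_2 power2_eq_square algebra_simps)
  then show ?thesis using u norm_2[of z] by simp
qed

lemma nsq_add: "(norm (a + b))\<^sup>2 = (norm a)\<^sup>2 + 2 * inner a b + (norm (b::'a::real_inner))\<^sup>2"
  unfolding power2_norm_eq_inner by (simp add: inner_add_left inner_add_right inner_commute)

lemma nsq_diff: "(norm (a - b))\<^sup>2 = (norm a)\<^sup>2 - 2 * inner a b + (norm (b::'a::real_inner))\<^sup>2"
  using nsq_add[of a "- b"] by simp


lemma arc_connected:
  fixes m x0 n :: R2
  assumes mx: "dist m x0 < r0"
  shows "connected {z \<in> sphere x0 r0. inner (z - m) n > 0}"
proof -
  define c where "c = r0\<^sup>2 - (norm (m - x0))\<^sup>2"
  have r0p: "r0 > 0" using mx zero_le_dist[of m x0] by linarith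
  have "norm (m - x0) < r0" using mx by (simp add: dist_norm)
  then have "(norm (m - x0))\<^sup>2 < r0\<^sup>2" by (rule power_strict_mono) auto
  then have c: "c > 0" by (simp add: c_def)
  define tt where "tt v = (- inner (m - x0) v + sqrt ((inner (m - x0) v)\<^sup>2 + inner v v * c)) / inner v v" for v
  define \<Psi> where "\<Psi> v = m + tt v *\<^sub>R v" for v
  define H where "H = {v::R2. inner v n > 0}"
  have Hne0: "v \<in> H \<Longrightarrow> inner v v > 0" for v
    by (auto simp: H_def)
  have "connected H" unfolding H_def
    by (rule convex_connected) (use convex_halfspace_gt[of 0 n] in \<open>simp add: inner_commute\<close>)
  moreover have "continuous_on H \<Psi>"
    unfolding \<Psi>_def tt_def
    by (intro continuous_intros) (auto dest: Hne0)
  ultimately have "connected (\<Psi> ` H)" by (rule connected_continuous_image[rotated])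
  moreover have "\<Psi> ` H = {z \<in> sphere x0 r0. inner (z - m) n > 0}"
  proof (intro equalityI subsetI)
    fix z assume "z \<in> \<Psi> ` H"
    then obtain v where v: "v \<in> H" "z = \<Psi> v" by auto
    define b where "b = inner (m - x0) v"
    define N where "N = inner v v"
    define sq where "sq = sqrt (b\<^sup>2 + N * c)"
    have N: "N > 0" using Hne0[OF v(1)] by (simp add: N_def)
    have Nc: "0 \<le> N * c" using N c by simp
    then have sq2: "sq\<^sup>2 = b\<^sup>2 + N * c" unfolding sq_def
      by (intro real_sqrt_pow2 add_nonneg_nonneg) auto
    have "0 \<le> b\<^sup>2 + N * c" using Nc by simp
    then have sq0: "sq \<ge> 0" by (simp add: sq_def)
    have "b < sq"
    proof -
      have "b\<^sup>2 < sq\<^sup>2" using sq2 N c by simp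
      then have "\<bar>b\<bar>\<^sup>2 < sq\<^sup>2" by simp
      then have "\<bar>b\<bar> < sq" using sq0 by (rule power2_less_imp_less)
      then show ?thesis by linarith
    qed
    define t where "t = (- b + sq) / N"
    have t: "t > 0" using \<open>b < sq\<close> N by (simp add: t_def)
    have tN: "t * N = - b + sq" using N by (simp add: t_def)
    have quad: "N * t\<^sup>2 + 2 * b * t = c"
    proof -
      have "(t * N + b)\<^sup>2 = b\<^sup>2 + N * c" using tN sq2 by simp
      then have "N * (N * t\<^sup>2 + 2 * b * t) = N * c" by (simp add: algebra_simps power2_eq_square)
      then show ?thesis using N by simp
    qed
    have zv: "z = m + t *\<^sub>R v" using v by (simp add: \<Psi>_def tt_def t_def b_def N_def sq_def)
    have "z - x0 = (m - x0) + t *\<^sub>R v" using zv by simp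
    then have "(norm (z - x0))\<^sup>2 = (norm (m - x0))\<^sup>2 + 2 * inner (m - x0) (t *\<^sub>R v) + (norm (t *\<^sub>R v))\<^sup>2"
      using nsq_add by metis
    also have "\<dots> = (norm (m - x0))\<^sup>2 + 2 * t * b + t\<^sup>2 * N"
      by (simp add: b_def N_def power_mult_distrib power2_norm_eq_inner[symmetric])
    also have "\<dots> = r0\<^sup>2" using quad by (simp add: c_def algebra_simps)
    finally have "(norm (z - x0))\<^sup>2 = r0\<^sup>2" .
    then have "norm (z - x0) = r0"
      using r0p power2_eq_imp_eq[of "norm (z - x0)" r0] by simp
    moreover have "inner (z - m) n > 0" using zv t v(1) by (simp add: H_def)
    ultimately show "z \<in> {z \<in> sphere x0 r0. inner (z - m) n > 0}" by (simp add: dist_norm norm_minus_commute)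
  next
    fix z assume z: "z \<in> {z \<in> sphere x0 r0. inner (z - m) n > 0}"
    define v where "v = z - m"
    have vH: "v \<in> H" using z by (simp add: H_def v_def)
    define b where "b = inner (m - x0) v"
    define N where "N = inner v v"
    have N: "N > 0" using Hne0[OF vH] by (simp add: N_def)
    have nz: "norm (z - x0) = r0" using z by (simp add: dist_norm norm_minus_commute)
    have "r0\<^sup>2 = (norm (m - x0))\<^sup>2 + 2 * b + N"
    proof -
      have e: "z - x0 = (m - x0) + v" by (simp add: v_def)
      have "(norm (z - x0))\<^sup>2 = (norm (m - x0))\<^sup>2 + 2 * b + N"
        unfolding e nsq_add by (simp add: b_def N_def power2_norm_eq_inner)
      then show ?thesis using nz by simp
    qed
    then have cN: "c = N + 2 * b" by (simp add: c_def)
    have bN: "b + N > 0"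
    proof -
      have "z - x0 = (m - x0) + v" by (simp add: v_def)
      then have "inner (z - x0) (z - m) = inner ((m - x0) + v) v" by (simp add: v_def)
      also have "\<dots> = b + N" unfolding b_def N_def by (simp add: inner_add_left)
      finally have "inner (z - x0) (z - m) = b + N" .
      then have "b + N = inner (z - x0) (z - m)" by simp
      also have "\<dots> = inner (z - x0) (z - x0) - inner (z - x0) (m - x0)"
        by (simp add: inner_diff_right[symmetric])
      also have "inner (z - x0) (m - x0) \<le> norm (z - x0) * norm (m - x0)"
        by (rule norm_cauchy_schwarz)
      then have "inner (z - x0) (z - x0) - inner (z - x0) (m - x0) \<ge> r0 * r0 - r0 * norm (m - x0)"
        using nz by (simp add: power2_norm_eq_inner[symmetric] power2_eq_square)
      moreover have "r0 * norm (m - x0) < r0 * r0" using mx r0p by (simp add: dist_norm)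
      ultimately show ?thesis by linarith
    qed
    have "sqrt (b\<^sup>2 + N * c) = b + N"
    proof -
      have "b\<^sup>2 + N * c = (b + N)\<^sup>2" using cN by (simp add: algebra_simps power2_eq_square)
      then show ?thesis using bN by simp
    qed
    then have "tt v = 1" using N by (simp add: tt_def b_def N_def)
    then have "\<Psi> v = z" by (simp add: \<Psi>_def v_def)
    then show "z \<in> \<Psi> ` H" using vH by blast
  qed
  ultimately show ?thesis by simp
qed


lemma comp_eq: "K \<in> components U \<Longrightarrow> K' \<in> components U \<Longrightarrow> x \<in> K \<Longrightarrow> x \<in> K' \<Longrightarrow> K = K'"
  using components_eq by blast

lemma tau_lemma:
  fixes r0 e c :: real
  assumes "r0 > 0" "e > 0" "c > 0"
  shows "0 < min c (e / (2 * r0))" "min c (e / (2 * r0)) \<le> c" "min c (e / (2 * r0)) * r0 < e"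
proof -
  show "0 < min c (e / (2 * r0))" using assms by simp
  show "min c (e / (2 * r0)) \<le> c" by simp
  have "min c (e / (2 * r0)) * r0 \<le> (e / (2 * r0)) * r0"
    using assms by (intro mult_right_mono) auto
  also have "\<dots> = e / 2" using assms by simp
  finally show "min c (e / (2 * r0)) * r0 < e" using assms by linarith
qed

lemma shrink:
  fixes z x0 :: R2
  assumes "z \<in> sphere x0 r0" "0 < \<tau>" "\<tau> < 1" "r0 > 0"
  shows "x0 + (1-\<tau>) *\<^sub>R (z - x0) \<in> ball x0 r0" "dist z (x0 + (1-\<tau>) *\<^sub>R (z - x0)) = \<tau> * r0"
proof -
  have nz: "norm (z - x0) = r0" using assms(1) by (simp add: dist_norm norm_minus_commute)
  have "dist x0 (x0 + (1-\<tau>) *\<^sub>R (z - x0)) = (1 - \<tau>) * r0"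
    using nz assms by (simp add: dist_norm)
  then show "x0 + (1-\<tau>) *\<^sub>R (z - x0) \<in> ball x0 r0" using assms by simp
  have "z - (x0 + (1-\<tau>) *\<^sub>R (z - x0)) = \<tau> *\<^sub>R (z - x0)" by (simp add: algebra_simps)
  then show "dist z (x0 + (1-\<tau>) *\<^sub>R (z - x0)) = \<tau> * r0"
    using nz assms by (simp add: dist_norm)
qed

locale conf =
  fixes x0 p q :: R2 and r0 :: real and E C1 C2 :: "R2 set" and \<nu> :: R2
  assumes r0: "r0 > 0"
    and cl: "closure E \<inter> sphere x0 r0 = {p, q}" and pq: "p \<noteq> q"
    and C1: "C1 \<in> components (ball x0 r0 - E)" and C2: "C2 \<in> components (ball x0 r0 - E)"
    and C12: "C1 \<noteq> C2"
    and nu: "norm \<nu> = 1"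
    and cap1: "{z \<in> ball x0 r0. inner (z - x0) \<nu> > r0/2} \<subseteq> C1"
    and cap2: "{z \<in> ball x0 r0. inner (z - x0) (-\<nu>) > r0/2} \<subseteq> C2"
begin

definition S where "S = sphere x0 r0 - {p, q}"
definition P where "P z K \<longleftrightarrow> K \<in> components (ball x0 r0 - E) \<and> (\<exists>e>0. ball z e \<inter> ball x0 r0 \<subseteq> K)"

lemma P_exists:
  assumes z: "z \<in> S" shows "\<exists>K. P z K"
proof -
  have "z \<notin> closure E"
  proof
    assume "z \<in> closure E"
    then have "z \<in> closure E \<inter> sphere x0 r0" using z by (simp add: S_def)
    then have "z \<in> {p, q}" using cl by simp
    with z show False by (simp add: S_def)
  qed
  then have zc: "z \<in> - closure E" by simp
  have oc: "open (- closure E)" by (rule open_Compl) (rule closed_closure)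
  obtain e where e: "e > 0" "ball z e \<subseteq> - closure E"
    by (rule openE[OF oc zc])
  then have eE: "ball z e \<inter> E = {}" using closure_subset by blast
  define N where "N = ball z e \<inter> ball x0 r0"
  have "connected N" unfolding N_def by (intro convex_connected convex_Int convex_ball)
  define \<tau> where "\<tau> = min (1/2) (e / (2 * r0))"
  have \<tau>: "0 < \<tau>" "\<tau> < 1" "\<tau> * r0 < e" using tau_lemma[OF r0 e(1), of "1/2"] by (simp_all add: \<tau>_def)
  define w where "w = x0 + (1-\<tau>) *\<^sub>R (z - x0)"
  have zs: "z \<in> sphere x0 r0" using z by (simp add: S_def)
  have sh: "w \<in> ball x0 r0" "dist z w = \<tau> * r0" using shrink[OF zs \<tau>(1,2) r0] by (simp_all add: w_def)
  have "w \<in> ball z e" using sh(2) \<tau>(3) by simp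
  then have w: "w \<in> N" using sh(1) by (simp add: N_def)
  have NE: "N \<subseteq> ball x0 r0 - E" using eE by (auto simp: N_def)
  define K where "K = connected_component_set (ball x0 r0 - E) w"
  have wU: "w \<in> ball x0 r0 - E" using w NE by blast
  have Kc: "K \<in> components (ball x0 r0 - E)" unfolding K_def components_iff using wU by blast
  have NK: "N \<subseteq> K" unfolding K_def by (rule connected_component_maximal[OF w \<open>connected N\<close> NE])
  have "P z K" unfolding P_def
  proof (intro conjI exI[of _ e])
    show "K \<in> components (ball x0 r0 - E)" by (rule Kc)
    show "e > 0" by (rule e(1))
    show "ball z e \<inter> ball x0 r0 \<subseteq> K" using NK by (simp add: N_def)
  qed
  then show ?thesis by blast
qed

lemma P_unique:
  assumes "z \<in> sphere x0 r0" "P z K" "P z K'" shows "K = K'"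
proof -
  obtain e where e: "e > 0" "ball z e \<inter> ball x0 r0 \<subseteq> K" and K: "K \<in> components (ball x0 r0 - E)"
    using assms(2) by (auto simp: P_def)
  obtain e' where e': "e' > 0" "ball z e' \<inter> ball x0 r0 \<subseteq> K'" and K': "K' \<in> components (ball x0 r0 - E)"
    using assms(3) by (auto simp: P_def)
  define \<tau> where "\<tau> = min (1/2) (min e e' / (2 * r0))"
  have "min e e' > 0" using e e' by simp
  note tl = tau_lemma[OF r0 this, of "1/2"]
  have \<tau>: "0 < \<tau>" "\<tau> < 1" "\<tau> * r0 < e" "\<tau> * r0 < e'" using tl by (simp_all add: \<tau>_def)
  define w where "w = x0 + (1-\<tau>) *\<^sub>R (z - x0)"
  have sh: "w \<in> ball x0 r0" "dist z w = \<tau> * r0" using shrink[OF assms(1) \<tau>(1,2) r0] by (simp_all add: w_def)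
  have "w \<in> ball z e" using sh(2) \<tau>(3) by simp
  then have wK: "w \<in> K" using e(2) sh(1) by blast
  have "w \<in> ball z e'" using sh(2) \<tau>(4) by simp
  then have wK': "w \<in> K'" using e'(2) sh(1) by blast
  show ?thesis by (rule comp_eq[OF K K' wK wK'])
qed

lemma P_local:
  assumes "P z K" shows "\<exists>e>0. \<forall>z'. dist z z' < e \<longrightarrow> P z' K"
proof -
  obtain e where e: "e > 0" "ball z e \<inter> ball x0 r0 \<subseteq> K" and K: "K \<in> components (ball x0 r0 - E)"
    using assms by (auto simp: P_def)
  have "P z' K" if "dist z z' < e/2" for z'
  proof -
    have "ball z' (e/2) \<subseteq> ball z e"
    proof
      fix x assume "x \<in> ball z' (e/2)"
      then have "dist z' x < e/2" by simp
      moreover have "dist z x \<le> dist z z' + dist z' x" by (rule dist_triangle)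
      ultimately show "x \<in> ball z e" using that by simp
    qed
    then have "ball z' (e/2) \<inter> ball x0 r0 \<subseteq> K" using e(2) by blast
    moreover have "e/2 > 0" using e(1) by simp
    ultimately show ?thesis unfolding P_def using K by blast
  qed
  then show ?thesis using e(1) by (intro exI[of _ "e/2"]) auto
qed

lemma P_const:
  assumes T: "connected T" "T \<subseteq> S" and ab: "a \<in> T" "b \<in> T" and Pa: "P a K"
  shows "P b K"
proof -
  have S_sph: "x \<in> S \<Longrightarrow> x \<in> sphere x0 r0" for x by (simp add: S_def)
  define R where "R x y \<longleftrightarrow> (\<exists>K. P x K \<and> P y K)" for x y
  have "R a b"
  proof (rule connected_equivalence_relation[OF T(1) ab])
    show "R y x" if "R x y" "x \<in> T" "y \<in> T" for x y using that by (auto simp: R_def)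
    show "R x z" if rxy: "R x y" and ryz: "R y z" and yT: "y \<in> T" for x y z
    proof -
      obtain K1 where "P x K1" "P y K1" using rxy unfolding R_def by blast
      obtain K2 where "P y K2" "P z K2" using ryz unfolding R_def by blast
      have "K1 = K2" using P_unique[OF _ \<open>P y K1\<close> \<open>P y K2\<close>] yT T(2) S_sph by blast
      then show ?thesis using \<open>P x K1\<close> \<open>P z K2\<close> by (auto simp: R_def)
    qed
    fix c assume c: "c \<in> T"
    then obtain K where K: "P c K" using P_exists T(2) by blast
    then obtain e where e: "e > 0" "\<And>z'. dist c z' < e \<Longrightarrow> P z' K" using P_local by blast
    show "\<exists>T'. openin (top_of_set T) T' \<and> c \<in> T' \<and> (\<forall>x\<in>T'. R c x)"
    proof (intro exI[of _ "T \<inter> ball c e"] conjI ballI)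
      show "openin (top_of_set T) (T \<inter> ball c e)" by (rule openin_open_Int) simp
      show "c \<in> T \<inter> ball c e" using c e by simp
      fix x assume "x \<in> T \<inter> ball c e"
      then have "P x K" using e(2) by simp
      then show "R c x" using K by (auto simp: R_def)
    qed
  qed
  then obtain K' where "P a K'" "P b K'" by (auto simp: R_def)
  moreover have "K' = K" using P_unique[OF _ \<open>P a K'\<close> Pa] ab T(2) S_sph by blast
  ultimately show ?thesis by simp
qed

lemma cross:
  fixes a b :: real
  assumes g: "continuous_on {a..b} \<gamma>" and ab: "a < b" and ga: "\<gamma> a \<in> S" and gb: "\<gamma> b \<in> S"
    and inside: "\<And>\<theta>. a < \<theta> \<Longrightarrow> \<theta> < b \<Longrightarrow> \<gamma> \<theta> \<in> ball x0 r0 - E"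
  shows "\<exists>K. P (\<gamma> a) K \<and> P (\<gamma> b) K"
proof -
  define F where "F = \<gamma> ` {a<..<b}"
  have "continuous_on {a<..<b} \<gamma>" by (rule continuous_on_subset[OF g]) auto
  then have "connected F" unfolding F_def using connected_continuous_image connected_Ioo by blast
  have FE: "F \<subseteq> ball x0 r0 - E" using inside by (auto simp: F_def)
  define c where "c = (a + b) / 2"
  have cF: "\<gamma> c \<in> F" using ab by (auto simp: F_def c_def)
  define K0 where "K0 = connected_component_set (ball x0 r0 - E) (\<gamma> c)"
  have K0: "K0 \<in> components (ball x0 r0 - E)" unfolding K0_def components_iff using cF FE by blast
  have FK0: "F \<subseteq> K0" unfolding K0_def by (rule connected_component_maximal) (use cF \<open>connected F\<close> FE in auto)
  have cont: "\<forall>x\<in>{a..b}. \<forall>e>0. \<exists>d>0. \<forall>x'\<in>{a..b}. dist x' x < d \<longrightarrow> dist (\<gamma> x') (\<gamma> x) < e"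
    using g unfolding continuous_on_iff .
  have end_a: "K = K0" if PK: "P (\<gamma> a) K" for K
  proof -
    obtain e where e: "e > 0" "ball (\<gamma> a) e \<inter> ball x0 r0 \<subseteq> K" and K: "K \<in> components (ball x0 r0 - E)"
      using PK by (auto simp: P_def)
    have xab: "a \<in> {a..b}" using ab by simp
    have "\<exists>d>0. \<forall>x'\<in>{a..b}. dist x' a < d \<longrightarrow> dist (\<gamma> x') (\<gamma> a) < e"
      using cont xab e(1) by blast
    then obtain d where d: "d > 0" "\<And>x'. x' \<in> {a..b} \<Longrightarrow> dist x' a < d \<Longrightarrow> dist (\<gamma> x') (\<gamma> a) < e"
      by blast
    define \<theta> where "\<theta> = a + min (d/2) ((b-a)/2)"
    have m: "min (d/2) ((b-a)/2) > 0" "min (d/2) ((b-a)/2) \<le> (b-a)/2" "min (d/2) ((b-a)/2) \<le> d/2"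
      using d(1) ab by (auto simp: min_def)
    have th: "a < \<theta>" "\<theta> < b" "dist \<theta> a < d" unfolding \<theta>_def dist_real_def using m d(1) ab by auto
    have "\<gamma> \<theta> \<in> F" using th by (auto simp: F_def)
    have "\<gamma> \<theta> \<in> ball (\<gamma> a) e" using d(2)[of \<theta>] th by (simp add: dist_commute)
    moreover have "\<gamma> \<theta> \<in> ball x0 r0" using FE \<open>\<gamma> \<theta> \<in> F\<close> by blast
    ultimately have "\<gamma> \<theta> \<in> K" using e(2) by blast
    moreover have "\<gamma> \<theta> \<in> K0" using FK0 \<open>\<gamma> \<theta> \<in> F\<close> by blast
    ultimately show ?thesis by (rule comp_eq[OF K K0])
  qed
  have end_b: "K = K0" if PK: "P (\<gamma> b) K" for K
  proof -
    obtain e where e: "e > 0" "ball (\<gamma> b) e \<inter> ball x0 r0 \<subseteq> K" and K: "K \<in> components (ball x0 r0 - E)"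
      using PK by (auto simp: P_def)
    have xab: "b \<in> {a..b}" using ab by simp
    have "\<exists>d>0. \<forall>x'\<in>{a..b}. dist x' b < d \<longrightarrow> dist (\<gamma> x') (\<gamma> b) < e"
      using cont xab e(1) by blast
    then obtain d where d: "d > 0" "\<And>x'. x' \<in> {a..b} \<Longrightarrow> dist x' b < d \<Longrightarrow> dist (\<gamma> x') (\<gamma> b) < e"
      by blast
    define \<theta> where "\<theta> = b - min (d/2) ((b-a)/2)"
    have m: "min (d/2) ((b-a)/2) > 0" "min (d/2) ((b-a)/2) \<le> (b-a)/2" "min (d/2) ((b-a)/2) \<le> d/2"
      using d(1) ab by (auto simp: min_def)
    have th: "a < \<theta>" "\<theta> < b" "dist \<theta> b < d" unfolding \<theta>_def dist_real_def using m d(1) ab by auto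
    have "\<gamma> \<theta> \<in> F" using th by (auto simp: F_def)
    have "\<gamma> \<theta> \<in> ball (\<gamma> b) e" using d(2)[of \<theta>] th by (simp add: dist_commute)
    moreover have "\<gamma> \<theta> \<in> ball x0 r0" using FE \<open>\<gamma> \<theta> \<in> F\<close> by blast
    ultimately have "\<gamma> \<theta> \<in> K" using e(2) by blast
    moreover have "\<gamma> \<theta> \<in> K0" using FK0 \<open>\<gamma> \<theta> \<in> F\<close> by blast
    ultimately show ?thesis by (rule comp_eq[OF K K0])
  qed
  obtain Ka where "P (\<gamma> a) Ka" using P_exists ga by blast
  obtain Kb where "P (\<gamma> b) Kb" using P_exists gb by blast
  have "Ka = K0" by (rule end_a) fact
  moreover have "Kb = K0" by (rule end_b) fact
  ultimately show ?thesis using \<open>P (\<gamma> a) Ka\<close> \<open>P (\<gamma> b) Kb\<close> by blast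
qed

lemma cap_comp_gen:
  assumes z: "z \<in> S" and PK: "P z K" and ip: "inner (z - x0) \<nu>' \<ge> 3/5 * r0"
    and capC: "{z \<in> ball x0 r0. inner (z - x0) \<nu>' > r0/2} \<subseteq> C" and C: "C \<in> components (ball x0 r0 - E)"
  shows "K = C"
proof -
  obtain e where e: "e > 0" "ball z e \<inter> ball x0 r0 \<subseteq> K" and K: "K \<in> components (ball x0 r0 - E)"
    using PK by (auto simp: P_def)
  define \<tau> where "\<tau> = min (1/10) (e / (2 * r0))"
  have \<tau>: "0 < \<tau>" "\<tau> \<le> 1/10" "\<tau> * r0 < e" using tau_lemma[OF r0 e(1), of "1/10"] by (simp_all add: \<tau>_def)
  define w where "w = x0 + (1-\<tau>) *\<^sub>R (z - x0)"
  have zs: "z \<in> sphere x0 r0" using z by (simp add: S_def)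
  have wb: "w \<in> ball x0 r0" "dist z w = \<tau> * r0" using shrink[OF zs \<tau>(1) _ r0] \<tau>(2) by (auto simp: w_def)
  have wK: "w \<in> K" using wb \<tau>(3) e(2) by auto
  have "inner (w - x0) \<nu>' = (1 - \<tau>) * inner (z - x0) \<nu>'" by (simp add: w_def)
  moreover have "(1 - \<tau>) * inner (z - x0) \<nu>' \<ge> (9/10) * (3/5 * r0)"
    by (rule mult_mono) (use ip \<tau> r0 in auto)
  ultimately have "inner (w - x0) \<nu>' > r0 / 2" using r0 by linarith
  then have "w \<in> C" using capC wb(1) by blast
  then show ?thesis using comp_eq[OF K C wK] by simp
qed

lemma cap_comp1: "z \<in> S \<Longrightarrow> P z K \<Longrightarrow> inner (z - x0) \<nu> \<ge> 3/5 * r0 \<Longrightarrow> K = C1"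
  by (rule cap_comp_gen[OF _ _ _ cap1 C1])

lemma cap_comp2: "z \<in> S \<Longrightarrow> P z K \<Longrightarrow> inner (z - x0) (-\<nu>) \<ge> 3/5 * r0 \<Longrightarrow> K = C2"
  by (rule cap_comp_gen[OF _ _ _ cap2 C2])

lemma cands:
  assumes nu': "norm \<nu>' = 1"
  shows "\<exists>z \<in> S. inner (z - x0) \<nu>' \<ge> 3/5 * r0"
proof -
  define a where "a = x0 + r0 *\<^sub>R \<nu>'"
  define b where "b = x0 + r0 *\<^sub>R ((3/5) *\<^sub>R \<nu>' + (4/5) *\<^sub>R rot \<nu>')"
  define c where "c = x0 + r0 *\<^sub>R ((3/5) *\<^sub>R \<nu>' - (4/5) *\<^sub>R rot \<nu>')"
  have nn: "inner \<nu>' \<nu>' = 1" using nu' by (simp add: norm_eq_1)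
  have nb: "norm ((3/5) *\<^sub>R \<nu>' + (4/5) *\<^sub>R rot \<nu>') = 1"
    unfolding norm_eq_1 using nn by (simp add: inner_add_left inner_add_right)
  have nc: "norm ((3/5) *\<^sub>R \<nu>' - (4/5) *\<^sub>R rot \<nu>') = 1"
    unfolding norm_eq_1 using nn by (simp add: inner_diff_left inner_diff_right)
  have sph: "a \<in> sphere x0 r0" "b \<in> sphere x0 r0" "c \<in> sphere x0 r0"
    using nu' nb nc r0 by (simp_all add: a_def b_def c_def dist_norm)
  have ip: "inner (a - x0) \<nu>' \<ge> 3/5 * r0" "inner (b - x0) \<nu>' \<ge> 3/5 * r0" "inner (c - x0) \<nu>' \<ge> 3/5 * r0"
    using nn r0 by (simp_all add: a_def b_def c_def inner_add_left inner_diff_left)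
  have rr: "inner (rot \<nu>') (rot \<nu>') = 1" using nn by simp
  have ir: "inner (a - x0) (rot \<nu>') = 0" "inner (b - x0) (rot \<nu>') = 4/5 * r0" "inner (c - x0) (rot \<nu>') = - 4/5 * r0"
    using rr by (simp_all add: a_def b_def c_def inner_add_left inner_diff_left)
  have dif: "x \<noteq> y" if "inner (x - x0) (rot \<nu>') \<noteq> inner (y - x0) (rot \<nu>')" for x y
    using that by auto
  have "a \<noteq> b" "a \<noteq> c" "b \<noteq> c" using r0 by (auto intro!: dif simp: ir)
  then have "a \<notin> {p,q} \<or> b \<notin> {p,q} \<or> c \<notin> {p,q}" by auto
  then show ?thesis
  proof (elim disjE)
    assume "a \<notin> {p,q}" then have "a \<in> S" using sph(1) by (simp add: S_def)
    then show ?thesis using ip(1) by blast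
  next
    assume "b \<notin> {p,q}" then have "b \<in> S" using sph(2) by (simp add: S_def)
    then show ?thesis using ip(2) by blast
  next
    assume "c \<notin> {p,q}" then have "c \<in> S" using sph(3) by (simp add: S_def)
    then show ?thesis using ip(3) by blast
  qed
qed

end


context conf begin

definition L where "L = dist p q"
definition u where "u = (1/L) *\<^sub>R (q - p)"
definition n where "n = rot u"
definition m where "m = p + (L/2) *\<^sub>R u"

lemma Lpos: "L > 0" using pq by (simp add: L_def)

lemma u1: "norm u = 1" using Lpos by (simp add: u_def L_def dist_norm norm_minus_commute)

lemma qpu: "q - p = L *\<^sub>R u" using Lpos by (simp add: u_def)

lemma pq_sph: "p \<in> sphere x0 r0" "q \<in> sphere x0 r0" using cl by blast+

lemma np: "norm (p - x0) = r0" "norm (q - x0) = r0"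
  using pq_sph by (simp_all add: dist_norm norm_minus_commute)

lemma ipu: "inner (p - x0) u = - L/2"
proof -
  have "q - x0 = (p - x0) + L *\<^sub>R u" using qpu by (simp add: algebra_simps)
  then have "(norm (q - x0))\<^sup>2 = (norm (p - x0))\<^sup>2 + 2 * inner (p - x0) (L *\<^sub>R u) + (norm (L *\<^sub>R u))\<^sup>2"
    using nsq_add by metis
  then have "r0\<^sup>2 = r0\<^sup>2 + 2 * L * inner (p - x0) u + L\<^sup>2" using np u1 Lpos by (simp add: power_mult_distrib)
  then have "L * (2 * inner (p - x0) u + L) = 0" by (simp add: algebra_simps power2_eq_square)
  then show ?thesis using Lpos by simp
qed

lemma Lle: "L \<le> 2 * r0"
proof -
  have "dist p q \<le> dist p x0 + dist x0 q" by (rule dist_triangle)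
  then show ?thesis using pq_sph by (simp add: L_def dist_commute)
qed

definition s0 where "s0 = inner (x0 - p) n"

lemma r0_pyth: "r0\<^sup>2 = (L/2)\<^sup>2 + s0\<^sup>2"
proof -
  have "(norm (x0 - p))\<^sup>2 = (inner (x0 - p) u)\<^sup>2 + (inner (x0 - p) (rot u))\<^sup>2" by (rule pyth[OF u1])
  moreover have "inner (x0 - p) u = L/2" using ipu by (simp add: inner_diff_left inner_diff_right algebra_simps)
  moreover have "norm (x0 - p) = r0" using np by (simp add: norm_minus_commute)
  ultimately show ?thesis by (simp add: s0_def n_def)
qed

lemma un: "inner u n = 0" by (simp add: n_def)

lemma mx: "dist m x0 < r0"
proof -
  have "m - x0 = (p - x0) + (L/2) *\<^sub>R u" by (simp add: m_def algebra_simps)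
  then have "(norm (m - x0))\<^sup>2 = (norm (p - x0))\<^sup>2 + 2 * inner (p - x0) ((L/2) *\<^sub>R u) + (norm ((L/2) *\<^sub>R u))\<^sup>2"
    using nsq_add by metis
  also have "\<dots> = r0\<^sup>2 - L\<^sup>2/4" using np u1 ipu Lpos by (simp add: power_mult_distrib power_divide power2_eq_square)
  also have "\<dots> < r0\<^sup>2" using Lpos by simp
  finally have "(norm (m - x0))\<^sup>2 < r0\<^sup>2" .
  then have "norm (m - x0) < r0" using r0 by (simp add: power_less_imp_less_base)
  then show ?thesis by (simp add: dist_norm)
qed

lemma inner_m: "inner (z - m) n' = inner (z - p) n' - (L/2) * inner u n'"
  by (simp add: m_def inner_diff_left algebra_simps)

lemma sphere_line:
  assumes z: "z \<in> sphere x0 r0" and zn: "inner (z - p) n = 0"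
  shows "z = p \<or> z = q"
proof -
  define lam where "lam = inner (z - p) u"
  have zp: "z - p = lam *\<^sub>R u" using decomp[OF u1, of "z - p"] zn by (simp add: lam_def n_def)
  have "z - x0 = (p - x0) + lam *\<^sub>R u" using zp by (simp add: algebra_simps)
  then have "(norm (z - x0))\<^sup>2 = (norm (p - x0))\<^sup>2 + 2 * inner (p - x0) (lam *\<^sub>R u) + (norm (lam *\<^sub>R u))\<^sup>2"
    using nsq_add by metis
  moreover have "norm (z - x0) = r0" using z by (simp add: dist_norm norm_minus_commute)
  ultimately have "r0\<^sup>2 = r0\<^sup>2 - lam * L + lam\<^sup>2" using np u1 ipu by (simp add: power_mult_distrib)
  then have h0: "lam\<^sup>2 - lam * L = 0" by linarith
  have "lam * (lam - L) = lam\<^sup>2 - lam * L" by (simp add: power2_eq_square algebra_simps)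
  then have "lam * (lam - L) = 0" using h0 by simp
  then have "lam = 0 \<or> lam - L = 0" by (simp only: mult_eq_0_iff)
  then show ?thesis
  proof
    assume "lam = 0" then show ?thesis using zp by simp
  next
    assume h: "lam - L = 0"
    have "z - p = (lam - L) *\<^sub>R u + L *\<^sub>R u" using zp by (simp add: algebra_simps)
    also have "\<dots> = q - p" using h qpu by simp
    finally show ?thesis by simp
  qed
qed

definition Ap where "Ap = {z \<in> sphere x0 r0. inner (z - m) n > 0}"
definition Am where "Am = {z \<in> sphere x0 r0. inner (z - m) (-n) > 0}"

lemma Ap_conn: "connected Ap" unfolding Ap_def by (rule arc_connected[OF mx])
lemma Am_conn: "connected Am" unfolding Am_def by (rule arc_connected[OF mx])

lemma inner_mn: "inner (z - m) n = inner (z - p) n" using inner_m[of z n] un by simp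

lemma Ap_S: "Ap \<subseteq> S"
proof
  fix z assume z: "z \<in> Ap"
  then have zs: "z \<in> sphere x0 r0" and pos: "inner (z - p) n > 0" by (auto simp: Ap_def inner_mn)
  have "inner (q - p) n = 0" using qpu un by simp
  then have "z \<noteq> p" "z \<noteq> q" using pos by auto
  then show "z \<in> S" using zs by (simp add: S_def)
qed

lemma Am_S: "Am \<subseteq> S"
proof
  fix z assume z: "z \<in> Am"
  have "inner (z - m) (- n) = - inner (z - p) n" using inner_mn[of z] by simp
  then have zs: "z \<in> sphere x0 r0" and neg: "inner (z - p) n < 0" using z by (auto simp: Am_def)
  have "inner (q - p) n = 0" using qpu un by simp
  then have "z \<noteq> p" "z \<noteq> q" using neg by auto
  then show "z \<in> S" using zs by (simp add: S_def)
qed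

lemma S_split: "z \<in> S \<Longrightarrow> z \<in> Ap \<or> z \<in> Am"
proof -
  assume z: "z \<in> S"
  then have zs: "z \<in> sphere x0 r0" and "z \<noteq> p" "z \<noteq> q" by (auto simp: S_def)
  then have "inner (z - p) n \<noteq> 0" using sphere_line by blast
  moreover have "inner (z - m) (- n) = - inner (z - p) n" using inner_mn[of z] by simp
  ultimately show ?thesis using zs inner_mn[of z] by (auto simp: Ap_def Am_def)
qed

lemma KpKm: "\<exists>Kp Km. (\<forall>z\<in>Ap. P z Kp) \<and> (\<forall>z\<in>Am. P z Km) \<and> Kp \<noteq> Km"
proof -
  obtain z1 where z1: "z1 \<in> S" "inner (z1 - x0) \<nu> \<ge> 3/5 * r0" using cands[OF nu] by blast
  have "norm (-\<nu>) = 1" using nu by simp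
  from cands[OF this] obtain z2 where z2: "z2 \<in> S" "inner (z2 - x0) (-\<nu>) \<ge> 3/5 * r0" by blast
  obtain K1 where "P z1 K1" using P_exists z1(1) by blast
  then have P1: "P z1 C1" using cap_comp1[OF z1(1) _ z1(2)] by metis
  obtain K2 where "P z2 K2" using P_exists z2(1) by blast
  then have P2: "P z2 C2" using cap_comp2[OF z2(1) _ z2(2)] by metis
  have sph: "z1 \<in> sphere x0 r0" "z2 \<in> sphere x0 r0" using z1 z2 by (auto simp: S_def)
  have all: "\<forall>z\<in>A. P z K" if "connected A" "A \<subseteq> S" "w \<in> A" "P w K" for A w K
    using P_const[OF that(1,2) that(3) _ that(4)] by blast
  show ?thesis
  proof (cases "z1 \<in> Ap")
    case True
    have "z2 \<notin> Ap"
    proof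
      assume "z2 \<in> Ap"
      then have "P z2 C1" using all[OF Ap_conn Ap_S True P1] by blast
      then show False using P_unique[OF sph(2) P2] C12 by blast
    qed
    then have "z2 \<in> Am" using S_split[OF z2(1)] by blast
    then show ?thesis using all[OF Ap_conn Ap_S True P1] all[OF Am_conn Am_S _ P2] C12 by blast
  next
    case False
    then have z1m: "z1 \<in> Am" using S_split[OF z1(1)] by blast
    have "z2 \<notin> Am"
    proof
      assume "z2 \<in> Am"
      then have "P z2 C1" using all[OF Am_conn Am_S z1m P1] by blast
      then show False using P_unique[OF sph(2) P2] C12 by blast
    qed
    then have "z2 \<in> Ap" using S_split[OF z2(1)] by blast
    then show ?thesis using all[OF Am_conn Am_S z1m P1] all[OF Ap_conn Ap_S _ P2] C12 by blast
  qed
qed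

end


context conf begin

lemma circle:
  assumes t: "0 < t" "t < L"
  shows "\<exists>z\<in>E. dist p z = t"
proof (rule ccontr)
  assume noE: "\<not> (\<exists>z\<in>E. dist p z = t)"
  obtain Kp Km where Kp: "\<And>z. z \<in> Ap \<Longrightarrow> P z Kp" and Km: "\<And>z. z \<in> Am \<Longrightarrow> P z Km" and KK: "Kp \<noteq> Km"
    using KpKm by blast
  define v where "v = (1/r0) *\<^sub>R (x0 - p)"
  have nv: "norm v = 1" using np r0 by (simp add: v_def norm_minus_commute)
  have vv: "inner v v = 1" using nv by (simp add: norm_eq_1)
  have pv: "p - x0 = (- r0) *\<^sub>R v" using r0 by (simp add: v_def)
  define c where "c = t / (2 * r0)"
  have c: "0 < c" "c < 1" using t Lle r0 by (auto simp: c_def field_simps)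
  define \<alpha> where "\<alpha> = arccos c"
  have al: "0 < \<alpha>" "\<alpha> < pi" using arccos_lt_bounded[of c] c by (auto simp: \<alpha>_def)
  have ca: "cos \<alpha> = c" using c by (simp add: \<alpha>_def)
  have sa: "sin \<alpha> = sqrt (1 - c\<^sup>2)" using c by (simp add: \<alpha>_def sin_arccos)
  define w where "w \<theta> = cos \<theta> *\<^sub>R v + sin \<theta> *\<^sub>R rot v" for \<theta>
  have nw: "norm (w \<theta>) = 1" for \<theta>
  proof -
    have "inner (w \<theta>) (w \<theta>) = (cos \<theta>)\<^sup>2 + (sin \<theta>)\<^sup>2"
      using vv by (simp add: w_def inner_add_left inner_add_right power2_eq_square)
    then show ?thesis by (simp add: norm_eq_1)
  qed
  define \<gamma> where "\<gamma> \<theta> = p + t *\<^sub>R w \<theta>" for \<theta>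
  have ipw: "inner (p - x0) (w \<theta>) = - r0 * cos \<theta>" for \<theta>
    unfolding pv w_def using vv by (simp add: inner_add_right)
  have nrm: "(norm (\<gamma> \<theta> - x0))\<^sup>2 = r0\<^sup>2 - 2 * t * r0 * cos \<theta> + t\<^sup>2" for \<theta>
  proof -
    have "\<gamma> \<theta> - x0 = (p - x0) + t *\<^sub>R w \<theta>" by (simp add: \<gamma>_def algebra_simps)
    then have "(norm (\<gamma> \<theta> - x0))\<^sup>2 = (norm (p - x0))\<^sup>2 + 2 * inner (p - x0) (t *\<^sub>R w \<theta>) + (norm (t *\<^sub>R w \<theta>))\<^sup>2"
      using nsq_add by metis
    then show ?thesis using np nw ipw t by (simp add: power_mult_distrib)
  qed
  have vn: "inner v n = s0 / r0" by (simp add: v_def s0_def)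
  have rvn: "inner (rot v) n = L / (2 * r0)"
  proof -
    have "inner (rot v) n = inner v u" by (simp add: n_def)
    also have "\<dots> = (1/r0) * inner (x0 - p) u" by (simp add: v_def)
    also have "inner (x0 - p) u = L/2" using ipu by (simp add: inner_diff_left algebra_simps)
    finally show ?thesis by simp
  qed
  have sgn: "inner (\<gamma> \<theta> - p) n = (t / r0) * (cos \<theta> * s0 + sin \<theta> * (L/2))" for \<theta>
    using vn rvn by (simp add: \<gamma>_def w_def inner_add_left algebra_simps)
  have key: "\<bar>c * s0\<bar> < sin \<alpha> * (L/2)"
  proof -
    have s0sq: "s0\<^sup>2 = r0\<^sup>2 - L\<^sup>2/4" using r0_pyth by (simp add: power_divide)
    have c2: "c\<^sup>2 * r0\<^sup>2 = t\<^sup>2 / 4" using r0 by (simp add: c_def power_divide power_mult_distrib)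
    have "(sin \<alpha> * (L/2))\<^sup>2 = (1 - c\<^sup>2) * (L\<^sup>2/4)"
    proof -
      have "c\<^sup>2 \<le> 1" using c by (intro power_le_one) auto
      then show ?thesis using sa by (simp add: power_mult_distrib power_divide)
    qed
    moreover have "\<bar>c * s0\<bar>\<^sup>2 = c\<^sup>2 * (r0\<^sup>2 - L\<^sup>2/4)" using s0sq by (simp add: power_mult_distrib)
    moreover have "c\<^sup>2 * (r0\<^sup>2 - L\<^sup>2/4) < (1 - c\<^sup>2) * (L\<^sup>2/4)"
    proof -
      have "t\<^sup>2 < L\<^sup>2" using t by (intro power_strict_mono) auto
      then show ?thesis using c2 by (simp add: algebra_simps)
    qed
    ultimately have "\<bar>c * s0\<bar>\<^sup>2 < (sin \<alpha> * (L/2))\<^sup>2" by simp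
    moreover have "sin \<alpha> * (L/2) \<ge> 0" using sin_gt_zero[OF al] Lpos by simp
    ultimately show ?thesis by (rule power2_less_imp_less)
  qed
  have pos: "inner (\<gamma> \<alpha> - p) n > 0"
  proof -
    have "cos \<alpha> * s0 = c * s0" using ca by simp
    moreover have "- \<bar>c * s0\<bar> \<le> c * s0" by simp
    ultimately have "cos \<alpha> * s0 + sin \<alpha> * (L/2) > 0" using key by linarith
    then show ?thesis using sgn[of \<alpha>] t r0 by simp
  qed
  have neg: "inner (\<gamma> (-\<alpha>) - p) n < 0"
  proof -
    have "cos (-\<alpha>) * s0 + sin (-\<alpha>) * (L/2) = c * s0 - sin \<alpha> * (L/2)" using ca by simp
    moreover have "c * s0 \<le> \<bar>c * s0\<bar>" by simp
    ultimately have hneg: "cos (-\<alpha>) * s0 + sin (-\<alpha>) * (L/2) < 0" using key by linarith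
    have "t / r0 > 0" using t r0 by simp
    then have "(t / r0) * (cos (-\<alpha>) * s0 + sin (-\<alpha>) * (L/2)) < 0" using hneg by (rule mult_pos_neg)
    then show ?thesis using sgn[of "-\<alpha>"] by simp
  qed
  have onsph: "\<gamma> \<theta> \<in> sphere x0 r0" if "cos \<theta> = c" for \<theta>
  proof -
    have "(norm (\<gamma> \<theta> - x0))\<^sup>2 = r0\<^sup>2" using nrm[of \<theta>] that r0 by (simp add: c_def power2_eq_square)
    then have "norm (\<gamma> \<theta> - x0) = r0" using r0 power2_eq_imp_eq[of "norm (\<gamma> \<theta> - x0)" r0] by simp
    then show ?thesis by (simp add: dist_norm norm_minus_commute)
  qed
  have gA: "\<gamma> \<alpha> \<in> Ap" using onsph[of \<alpha>] ca pos by (simp add: Ap_def inner_mn)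
  have gB: "\<gamma> (-\<alpha>) \<in> Am"
  proof -
    have "inner (\<gamma> (-\<alpha>) - m) (-n) = - inner (\<gamma> (-\<alpha>) - p) n" using inner_mn[of "\<gamma> (-\<alpha>)"] by simp
    then show ?thesis using onsph[of "-\<alpha>"] ca neg by (simp add: Am_def)
  qed
  have inside: "\<gamma> \<theta> \<in> ball x0 r0 - E" if th: "-\<alpha> < \<theta>" "\<theta> < \<alpha>" for \<theta>
  proof -
    have "cos \<alpha> < cos \<bar>\<theta>\<bar>" using th al by (intro cos_monotone_0_pi) auto
    then have cth: "c < cos \<theta>" using ca by simp
    have "t < 2 * r0 * cos \<theta>" using cth r0 by (simp add: c_def field_simps)
    then have "t * t < t * (2 * r0 * cos \<theta>)" using t by (intro mult_strict_left_mono) auto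
    moreover have "t * (2 * r0 * cos \<theta>) = 2 * t * r0 * cos \<theta>" by simp
    moreover have "t\<^sup>2 = t * t" by (simp add: power2_eq_square)
    ultimately have "(norm (\<gamma> \<theta> - x0))\<^sup>2 < r0\<^sup>2" using nrm[of \<theta>] by linarith
    then have "norm (\<gamma> \<theta> - x0) < r0" using r0 by (simp add: power_less_imp_less_base)
    then have "\<gamma> \<theta> \<in> ball x0 r0" by (simp add: dist_norm norm_minus_commute)
    moreover have "dist p (\<gamma> \<theta>) = t" using nw t by (simp add: \<gamma>_def dist_norm)
    ultimately show ?thesis using noE by blast
  qed
  have cont: "continuous_on {-\<alpha>..\<alpha>} \<gamma>" unfolding \<gamma>_def w_def by (intro continuous_intros)
  obtain K where K: "P (\<gamma> (-\<alpha>)) K" "P (\<gamma> \<alpha>) K"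
    using cross[OF cont _ Am_S[THEN subsetD, OF gB] Ap_S[THEN subsetD, OF gA] inside] al by auto
  have s1: "\<gamma> (-\<alpha>) \<in> sphere x0 r0" "\<gamma> \<alpha> \<in> sphere x0 r0" using gA gB by (auto simp: Ap_def Am_def)
  have "K = Km" using P_unique[OF s1(1) K(1) Km[OF gB]] .
  moreover have "K = Kp" using P_unique[OF s1(2) K(2) Kp[OF gA]] .
  ultimately show False using KK by simp
qed

end


lemma dist_lip: "\<bar>dist p x - dist p y\<bar> \<le> dist x y"
  using dist_triangle[of p x y] dist_triangle[of p y x] by (simp add: dist_commute)

lemma sep_balls:
  fixes a b :: "'a::metric_space"
  assumes "ra + rb + g \<le> dist a b"
  shows "\<And>x y. x \<in> ball a ra \<Longrightarrow> y \<in> ball b rb \<Longrightarrow> g \<le> dist x y"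
proof -
  fix x y assume "x \<in> ball a ra" "y \<in> ball b rb"
  then have "dist a x < ra" "dist b y < rb" by auto
  moreover have "dist a b \<le> dist a x + dist x y + dist y b"
    using dist_triangle[of a b x] dist_triangle[of x b y] by linarith
  ultimately show "g \<le> dist x y" using assms by (simp add: dist_commute)
qed

lemma main_bound:
  fixes E :: "R2 set" and p q w x0 :: R2
  assumes r0: "r0 > 0" and C0: "C0 \<ge> 1"
    and ahl: "\<And>x r. x \<in> E \<Longrightarrow> r > 0 \<Longrightarrow> ball x r \<subseteq> ball x0 r0 \<Longrightarrow> ennreal (r / C0) \<le> H1 (E \<inter> ball x r)"
    and cp: "\<And>t. 0 < t \<Longrightarrow> t < dist p q \<Longrightarrow> \<exists>z\<in>E. dist p z = t"
    and cq: "\<And>t. 0 < t \<Longrightarrow> t < dist p q \<Longrightarrow> \<exists>z\<in>E. dist q z = t"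
    and psph: "dist x0 p = r0" and qsph: "dist x0 q = r0"
    and Lr: "dist p q \<ge> r0"
    and w: "w \<in> E" "dist x0 w < r0/2"
    and g: "0 < g" "g < r0/8"
  shows "ennreal (dist p q - g + (min ((dist p w + dist q w - dist p q)/2) (r0/4) - g)/C0) \<le> H1 E"
proof -
  define L where "L = dist p q"
  define dp where "dp = dist p w"
  define dq where "dq = dist q w"
  define M where "M = min ((dp + dq - L)/2) (r0/4)"
  define r3 where "r3 = M - g"
  define r1 where "r1 = max 0 (L - dq + r3)"
  define r2 where "r2 = L - g - r1"
  have dp: "dp > r0/2"
    using dist_triangle[of x0 p w] psph w(2) by (simp add: dp_def dist_commute)
  have dq: "dq > r0/2"
    using dist_triangle[of x0 q w] qsph w(2) by (simp add: dq_def dist_commute)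
  have D: "L \<le> dp + dq" using dist_triangle[of p q w] by (simp add: L_def dp_def dq_def dist_commute)
  have M: "M \<le> (dp + dq - L)/2" "M \<le> r0/4" unfolding M_def by (rule min.cobounded1, rule min.cobounded2)
  have r1: "r1 \<ge> 0" "r1 \<ge> L - dq + r3" by (simp_all add: r1_def)
  have r1': "r1 = 0 \<or> r1 = L - dq + r3" by (simp add: r1_def max_def)
  have c1: "r2 \<ge> 0" using r1' r1 dq M Lr g by (auto simp: r2_def r3_def L_def)
  have c2: "r1 + r3 + g \<le> dp" using r1' M dp dq r0 g by (auto simp: r3_def)
  have c3: "r2 + r3 + g \<le> dq" using r1 by (simp add: r2_def)
  have c4: "r1 + r2 + g \<le> L" by (simp add: r2_def)
  have r1L: "r1 \<le> L" "r2 \<le> L" using c1 c4 r1 g by linarith+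
  have x1: "ennreal r1 \<le> hausdorff_pre1 \<delta> (E \<inter> ball p r1)" for \<delta>
  proof -
    have "ennreal (r1 - 0) \<le> hausdorff_pre1 \<delta> (E \<inter> ball p r1)"
    proof (rule eilenberg[of "dist p"])
      show "\<bar>dist p x - dist p y\<bar> \<le> dist x y" for x y by (rule dist_lip)
      show "0 \<le> r1" by (rule r1(1))
      fix t assume t: "0 < t" "t < r1"
      then obtain z where "z \<in> E" "dist p z = t" using cp r1L by (force simp: L_def)
      then show "\<exists>z\<in>E \<inter> ball p r1. dist p z = t" using t by auto
    qed
    then show ?thesis by simp
  qed
  have x2: "ennreal r2 \<le> hausdorff_pre1 \<delta> (E \<inter> ball q r2)" for \<delta>
  proof -
    have "ennreal (r2 - 0) \<le> hausdorff_pre1 \<delta> (E \<inter> ball q r2)"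
    proof (rule eilenberg[of "dist q"])
      show "\<bar>dist q x - dist q y\<bar> \<le> dist x y" for x y by (rule dist_lip)
      show "0 \<le> r2" by (rule c1)
      fix t assume t: "0 < t" "t < r2"
      then obtain z where "z \<in> E" "dist q z = t" using cq r1L by (force simp: L_def)
      then show "\<exists>z\<in>E \<inter> ball q r2. dist q z = t" using t by auto
    qed
    then show ?thesis by simp
  qed
  have x3: "ennreal (r3 / C0) \<le> H1 (E \<inter> ball w r3)"
  proof (cases "r3 > 0")
    case True
    have "ball w r3 \<subseteq> ball x0 r0"
    proof
      fix y assume "y \<in> ball w r3"
      then have "dist w y < r3" by simp
      moreover have "dist x0 y \<le> dist x0 w + dist w y" by (rule dist_triangle)
      moreover have "r3 \<le> r0/4" using M g by (simp add: r3_def)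
      ultimately show "y \<in> ball x0 r0" using w(2) r0 by simp
    qed
    then show ?thesis using ahl[OF w(1) True] by simp
  next
    case False
    then have "r3 / C0 \<le> 0" using C0 by (simp add: divide_nonpos_pos)
    then have "ennreal (r3 / C0) = 0" by (rule ennreal_neg)
    then show ?thesis by simp
  qed
  have "ennreal r1 + ennreal r2 + H1 (E \<inter> ball w r3) \<le> H1 E"
  proof (rule H1_split[OF g(1)])
    show "g \<le> dist x y" if "x \<in> ball p r1" "y \<in> ball q r2" for x y
      using sep_balls[of r1 r2 g p q] c4 that by (simp add: L_def)
    show "g \<le> dist x y" if "x \<in> ball p r1" "y \<in> ball w r3" for x y
      using sep_balls[of r1 r3 g p w] c2 that by (simp add: dp_def)
    show "g \<le> dist x y" if "x \<in> ball q r2" "y \<in> ball w r3" for x y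
      using sep_balls[of r2 r3 g q w] c3 that by (simp add: dq_def)
    show "ennreal r1 \<le> hausdorff_pre1 \<delta> (E \<inter> ball p r1)" for \<delta> by (rule x1)
    show "ennreal r2 \<le> hausdorff_pre1 \<delta> (E \<inter> ball q r2)" for \<delta> by (rule x2)
  qed
  moreover have "ennreal r1 + ennreal r2 + ennreal (r3 / C0) \<le> ennreal r1 + ennreal r2 + H1 (E \<inter> ball w r3)"
    using x3 by (rule add_left_mono)
  ultimately have main: "ennreal r1 + ennreal r2 + ennreal (r3 / C0) \<le> H1 E" by (rule order_trans[rotated])
  have Lg: "L - g \<ge> 0" using r1(1) c1 by (simp add: r2_def)
  have "ennreal r1 + ennreal r2 = ennreal (r1 + r2)" using r1(1) c1 by (rule ennreal_plus[symmetric])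
  then have e12: "ennreal r1 + ennreal r2 = ennreal (L - g)" by (simp add: r2_def)
  have "ennreal (L - g + r3 / C0) \<le> ennreal (L - g) + ennreal (r3 / C0)"
  proof (cases "r3 / C0 \<ge> 0")
    case True
    have "ennreal (L - g + r3 / C0) = ennreal (L - g) + ennreal (r3 / C0)" using Lg True by (rule ennreal_plus)
    then show ?thesis by simp
  next
    case False
    then have "ennreal (L - g + r3 / C0) \<le> ennreal (L - g)" by (intro ennreal_leI) simp
    also have "\<dots> \<le> ennreal (L - g) + ennreal (r3 / C0)" by simp
    finally show ?thesis .
  qed
  then have "ennreal (L - g + r3 / C0) \<le> H1 E" using main e12 by simp
  then show ?thesis by (simp add: L_def r3_def M_def dp_def dq_def)
qed


lemma width_bounds:
  assumes "\<rho> > 0"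
  shows "0 \<le> width E x0 \<rho> \<nu>" "width E x0 \<rho> \<nu> \<le> \<rho>"
    "bdd_above (insert 0 ((\<lambda>y. infdist y (line_normal x0 \<nu>)) ` (E \<inter> ball x0 \<rho>)))"
proof -
  define X where "X = insert 0 ((\<lambda>y. infdist y (line_normal x0 \<nu>)) ` (E \<inter> ball x0 \<rho>))"
  have x0l: "x0 \<in> line_normal x0 \<nu>" by (simp add: line_normal_def)
  have ub: "x \<le> \<rho>" if xX: "x \<in> X" for x
  proof -
    consider "x = 0" | y where "y \<in> E \<inter> ball x0 \<rho>" "x = infdist y (line_normal x0 \<nu>)"
      using xX unfolding X_def by blast
    then show ?thesis
    proof cases
      case 1 then show ?thesis using assms by simp
    next
      case 2
      have "infdist y (line_normal x0 \<nu>) \<le> dist y x0" by (rule infdist_le[OF x0l])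
      then show ?thesis using 2 by (simp add: dist_commute)
    qed
  qed
  have bdd: "bdd_above X" using ub by (intro bdd_aboveI) auto
  then show "bdd_above (insert 0 ((\<lambda>y. infdist y (line_normal x0 \<nu>)) ` (E \<inter> ball x0 \<rho>)))" by (simp add: X_def)
  have "0 \<le> Sup X" by (rule cSup_upper) (use bdd in \<open>auto simp: X_def\<close>)
  then show "0 \<le> width E x0 \<rho> \<nu>" by (simp add: width_def X_def)
  have "Sup X \<le> \<rho>" by (rule cSup_least) (use ub in \<open>auto simp: X_def\<close>)
  then show "width E x0 \<rho> \<nu> \<le> \<rho>" by (simp add: width_def X_def)
qed

lemma beta_bounds:
  assumes "\<rho> > 0" "norm \<nu> = 1"
  shows "0 \<le> beta E x0 \<rho>" "beta E x0 \<rho> \<le> 1" "beta E x0 \<rho> * \<rho> \<le> width E x0 \<rho> \<nu>"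
proof -
  define I where "I = (INF \<mu> \<in> {\<mu>::R2. norm \<mu> = 1}. width E x0 \<rho> \<mu>)"
  have bb: "bdd_below ((\<lambda>\<mu>. width E x0 \<rho> \<mu>) ` {\<mu>::R2. norm \<mu> = 1})"
    using width_bounds(1)[OF assms(1)] by (intro bdd_belowI) auto
  have "I \<le> width E x0 \<rho> \<nu>" unfolding I_def by (rule cINF_lower[OF bb]) (use assms in simp)
  moreover have "0 \<le> I" unfolding I_def
    by (rule cINF_greatest) (use assms width_bounds(1)[OF assms(1)] in auto)
  moreover have "width E x0 \<rho> \<nu> \<le> \<rho>" by (rule width_bounds(2)[OF assms(1)])
  moreover have "beta E x0 \<rho> = I / \<rho>" by (simp add: beta_def I_def)
  ultimately have Iw: "I \<le> width E x0 \<rho> \<nu>" and I0: "0 \<le> I" and wr: "width E x0 \<rho> \<nu> \<le> \<rho>"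
    and bI: "beta E x0 \<rho> = I / \<rho>" by auto
  show "0 \<le> beta E x0 \<rho>" using bI I0 assms(1) by simp
  show "beta E x0 \<rho> \<le> 1" using bI Iw wr assms(1) by simp
  show "beta E x0 \<rho> * \<rho> \<le> width E x0 \<rho> \<nu>" using bI Iw assms(1) by simp
qed

lemma width_point:
  assumes "\<rho> > 0" "norm \<nu> = 1" "0 < a" "a < width E x0 \<rho> \<nu>"
  shows "\<exists>y\<in>E \<inter> ball x0 \<rho>. a < \<bar>inner (y - x0) \<nu>\<bar>"
proof -
  define X where "X = insert 0 ((\<lambda>y. infdist y (line_normal x0 \<nu>)) ` (E \<inter> ball x0 \<rho>))"
  have "bdd_above X" using width_bounds(3)[OF assms(1)] by (simp add: X_def)
  moreover have "X \<noteq> {}" by (simp add: X_def)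
  moreover have "a < Sup X" using assms(4) by (simp add: width_def X_def)
  ultimately obtain x where x: "x \<in> X" "a < x" using less_cSup_iff by blast
  then have "x \<noteq> 0" using assms(3) by auto
  then obtain y where y: "y \<in> E \<inter> ball x0 \<rho>" "x = infdist y (line_normal x0 \<nu>)" using x(1) by (auto simp: X_def)
  define f where "f = y - inner (y - x0) \<nu> *\<^sub>R \<nu>"
  have nn: "inner \<nu> \<nu> = 1" using assms(2) by (simp add: norm_eq_1)
  have "inner (f - x0) \<nu> = 0" using nn by (simp add: f_def inner_diff_left algebra_simps)
  then have "f \<in> line_normal x0 \<nu>" by (simp add: line_normal_def)
  then have "infdist y (line_normal x0 \<nu>) \<le> dist y f" by (rule infdist_le)
  also have "dist y f = \<bar>inner (y - x0) \<nu>\<bar>" using assms(2) by (simp add: f_def dist_norm)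
  finally show ?thesis using x y by force
qed

lemma final_arith:
  fixes \<beta> h r0 C0 L X D :: real
  assumes r0: "r0 > 0" and C0: "C0 \<ge> 1" and b: "0 \<le> \<beta>" "\<beta> \<le> 1" and h: "9/40 * \<beta> * r0 \<le> h"
    and D: "2 * h\<^sup>2 / (3 * r0) \<le> D" and X: "L + min (D/2) (r0/4) / C0 \<le> X"
  shows "\<beta>\<^sup>2 \<le> 64 * C0 / r0 * (X - L)"
proof -
  define M where "M = min (D/2) (r0/4)"
  have "M / C0 \<le> X - L" using X by (simp add: M_def)
  then have CM: "M \<le> C0 * (X - L)" using C0 by (simp add: field_simps)
  define b' where "b' = \<beta> * r0"
  have b'0: "0 \<le> b'" using b r0 by (simp add: b'_def)
  have key: "b'\<^sup>2 \<le> 64 * M * r0"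
  proof (cases "D/2 \<le> r0/4")
    case True
    then have MD: "M = D/2" by (simp add: M_def)
    have "b' \<le> 40/9 * h" using h by (simp add: b'_def)
    then have "b'\<^sup>2 \<le> (40/9 * h)\<^sup>2" using b'0 by (intro power_mono) auto
    also have "\<dots> = 1600/81 * h\<^sup>2" by (simp add: power2_eq_square)
    also have "\<dots> \<le> 64/3 * h\<^sup>2" by simp
    also have "64/3 * h\<^sup>2 = 32 * (2 * h\<^sup>2 / (3 * r0)) * r0" using r0 by simp
    also have "\<dots> \<le> 32 * D * r0" using D r0 by (intro mult_right_mono mult_left_mono) auto
    also have "\<dots> = 64 * M * r0" using MD by simp
    finally show ?thesis .
  next
    case False
    then have MD: "M = r0/4" by (simp add: M_def)
    have "b' \<le> r0" using b r0 by (simp add: b'_def)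
    then have "b'\<^sup>2 \<le> r0\<^sup>2" using b'0 by (intro power_mono) auto
    also have "\<dots> \<le> 16 * r0\<^sup>2" by simp
    also have "\<dots> = 64 * M * r0" using MD by (simp add: power2_eq_square)
    finally show ?thesis .
  qed
  have "\<beta>\<^sup>2 * r0\<^sup>2 \<le> 64 * M * r0" using key by (simp add: b'_def power_mult_distrib)
  then have "\<beta>\<^sup>2 \<le> 64 * M / r0" using r0 by (simp add: field_simps power2_eq_square)
  also have "\<dots> \<le> 64 * (C0 * (X - L)) / r0" using CM r0 by (intro divide_right_mono mult_left_mono) auto
  also have "\<dots> = 64 * C0 / r0 * (X - L)" by simp
  finally show ?thesis .
qed

context conf begin

lemma excess:
  assumes hh: "h = \<bar>inner (w - p) n\<bar>" and h32: "h \<le> 3/2 * r0"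
  shows "L + 2 * h\<^sup>2 / (3 * r0) \<le> dist p w + dist q w"
proof -
  define a where "a = inner (w - p) u"
  define s where "s = inner (w - p) n"
  have ss: "s\<^sup>2 = h\<^sup>2" using hh by (simp add: s_def)
  define Y where "Y = (L - a) *\<^sub>R u + s *\<^sub>R n"
  have uu: "inner u u = 1" using u1 by (simp add: norm_eq_1)
  have nn: "inner n n = 1" using uu by (simp add: n_def)
  have nw: "(norm (w - p))\<^sup>2 = a\<^sup>2 + s\<^sup>2" using pyth[OF u1, of "w - p"] by (simp add: a_def s_def n_def)
  have iqw: "inner (q - w) u = L - a" "inner (q - w) n = - s"
  proof -
    have e: "q - w = L *\<^sub>R u - (w - p)" using qpu by (simp add: algebra_simps)
    have "inner (q - w) u = inner (L *\<^sub>R u - (w - p)) u" by (simp only: e)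
    also have "\<dots> = L - a" using uu by (simp add: inner_diff_left a_def)
    finally show "inner (q - w) u = L - a" .
    have "inner (q - w) n = inner (L *\<^sub>R u - (w - p)) n" by (simp only: e)
    also have "\<dots> = - s" using un by (simp add: inner_diff_left s_def)
    finally show "inner (q - w) n = - s" .
  qed
  have nqw: "(norm (q - w))\<^sup>2 = (L - a)\<^sup>2 + s\<^sup>2"
    using pyth[OF u1, of "q - w"] iqw by (simp add: n_def)
  have nu0: "inner n u = 0" using un by (simp add: inner_commute)
  have iY: "inner Y u = L - a" "inner Y n = s" using uu nn un nu0 by (simp_all add: Y_def inner_add_left)
  have nY: "(norm Y)\<^sup>2 = (L - a)\<^sup>2 + s\<^sup>2" using pyth[OF u1, of Y] iY by (simp add: n_def)
  have "norm Y = norm (q - w)" using nY nqw by (metis norm_ge_zero power2_eq_imp_eq)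
  have iXY: "inner ((w - p) + Y) u = L" "inner ((w - p) + Y) n = 2 * s"
    using iY by (simp_all add: inner_add_left a_def s_def)
  have nXY: "(norm ((w - p) + Y))\<^sup>2 = L\<^sup>2 + 4 * h\<^sup>2"
    using pyth[OF u1, of "(w - p) + Y"] iXY ss by (simp add: n_def power_mult_distrib)
  define k where "k = 2 * h\<^sup>2 / (3 * r0)"
  have h0: "0 \<le> h" using hh by simp
  have k0: "0 \<le> k" using r0 by (simp add: k_def)
  have kh: "k \<le> h"
  proof -
    have "k = h * (2 * h / (3 * r0))" by (simp add: k_def power2_eq_square)
    also have "2 * h / (3 * r0) \<le> 1" using h32 r0 by (simp add: field_simps)
    then have "h * (2 * h / (3 * r0)) \<le> h * 1" using h0 by (intro mult_left_mono) auto
    finally show ?thesis by simp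
  qed
  have "(L + k)\<^sup>2 \<le> L\<^sup>2 + 4 * h\<^sup>2"
  proof -
    have "(L + k)\<^sup>2 = L\<^sup>2 + 2 * L * k + k\<^sup>2" by (simp add: power2_eq_square algebra_simps)
    moreover have "2 * L * k \<le> 2 * (2 * r0) * k" using Lle k0 by (intro mult_right_mono) auto
    moreover have "2 * (2 * r0) * k = 8/3 * h\<^sup>2" using r0 by (simp add: k_def)
    moreover have "k\<^sup>2 \<le> h\<^sup>2" using kh k0 by (intro power_mono) auto
    moreover have "0 \<le> h\<^sup>2" by simp
    ultimately show ?thesis by linarith
  qed
  then have "L + k \<le> norm ((w - p) + Y)" using nXY Lpos k0
    by (metis add_nonneg_nonneg less_imp_le norm_ge_zero power2_le_imp_le)
  also have "\<dots> \<le> norm (w - p) + norm Y" by (rule norm_triangle_ineq)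
  also have "\<dots> = dist p w + dist q w" using \<open>norm Y = norm (q - w)\<close> by (simp add: dist_norm norm_minus_commute)
  finally show ?thesis by (simp add: k_def)
qed

end


theorem lemma4p30:
  fixes x0 p q :: R2 and r0 C0 :: real and E :: "R2 set"
  assumes "r0 > 0"
    and "closedin (top_of_set (ball x0 r0)) E"
    and "x0 \<in> E"
    and "separates E x0 r0"
    and "C0 \<ge> 1"
    and "\<And>x r. x \<in> E \<Longrightarrow> r > 0 \<Longrightarrow> ball x r \<subseteq> ball x0 r0 \<Longrightarrow>
            H1 (E \<inter> ball x r) \<ge> ennreal (r / C0)"
    and "closure E \<inter> sphere x0 r0 = {p, q}" and "p \<noteq> q"
    and "dist p q \<ge> r0"
  shows "H1 E = \<infinity> \<or>
         (beta E x0 (r0/2))\<^sup>2 \<le> 64 * C0 / r0 * (enn2real (H1 E) - dist p q)"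
proof -
  note r0 = assms(1) and x0E = assms(3) and C0 = assms(5) and ahl = assms(6) and cl = assms(7)
    and pq = assms(8) and Lr = assms(9)
  from assms(4) obtain \<nu> C1 C2 where nu: "norm \<nu> = 1"
    and C1: "C1 \<in> components (ball x0 r0 - E)" and C2: "C2 \<in> components (ball x0 r0 - E)"
    and C12: "C1 \<noteq> C2"
    and h1: "halfdisc x0 r0 \<nu> (beta E x0 r0 * r0) \<subseteq> C1"
    and h2: "halfdisc x0 r0 (-\<nu>) (beta E x0 r0 * r0) \<subseteq> C2"
    and b0: "beta E x0 r0 \<le> 1/2"
    unfolding separates_def by blast
  have br: "beta E x0 r0 * r0 \<le> r0/2" using mult_right_mono[OF b0, of r0] r0 by simp
  have cap1: "{z \<in> ball x0 r0. inner (z - x0) \<nu> > r0/2} \<subseteq> C1"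
  proof
    fix z assume "z \<in> {z \<in> ball x0 r0. inner (z - x0) \<nu> > r0/2}"
    then have "z \<in> halfdisc x0 r0 \<nu> (beta E x0 r0 * r0)" using br by (simp add: halfdisc_def)
    then show "z \<in> C1" using h1 by blast
  qed
  have cap2: "{z \<in> ball x0 r0. inner (z - x0) (-\<nu>) > r0/2} \<subseteq> C2"
  proof
    fix z assume "z \<in> {z \<in> ball x0 r0. inner (z - x0) (-\<nu>) > r0/2}"
    then have "z \<in> halfdisc x0 r0 (-\<nu>) (beta E x0 r0 * r0)" using br by (simp add: halfdisc_def)
    then show "z \<in> C2" using h2 by blast
  qed
  interpret c1: conf x0 p q r0 E C1 C2 \<nu>
    by (unfold_locales) (fact r0 cl pq C1 C2 C12 nu cap1 cap2)+
  have cl': "closure E \<inter> sphere x0 r0 = {q, p}" using cl by (simp add: insert_commute)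
  have qp: "q \<noteq> p" using pq by simp
  interpret c2: conf x0 q p r0 E C1 C2 \<nu>
    by (unfold_locales) (fact r0 cl' qp C1 C2 C12 nu cap1 cap2)+
  have cp: "\<exists>z\<in>E. dist p z = t" if "0 < t" "t < dist p q" for t
    using c1.circle[of t] that by (simp add: c1.L_def)
  have cq: "\<exists>z\<in>E. dist q z = t" if "0 < t" "t < dist p q" for t
    using c2.circle[of t] that by (simp add: c2.L_def dist_commute)
  have psph: "dist x0 p = r0" "dist x0 q = r0" using c1.pq_sph by auto
  define \<beta> where "\<beta> = beta E x0 (r0/2)"
  define n where "n = c1.n"
  have n1: "norm n = 1" using c1.u1 by (simp add: n_def c1.n_def)
  have r02: "r0/2 > 0" using r0 by simp
  have bb: "0 \<le> \<beta>" "\<beta> \<le> 1" "\<beta> * (r0/2) \<le> width E x0 (r0/2) n"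
    using beta_bounds[OF r02 n1, of E x0] by (simp_all add: \<beta>_def)
  obtain w where w: "w \<in> E" "dist x0 w < r0/2" "9/40 * \<beta> * r0 \<le> \<bar>inner (w - p) n\<bar>"
  proof (cases "\<beta> > 0")
    case True
    have a0: "0 < (9/10) * (\<beta> * (r0/2))" using True r0 by simp
    have "(9/10) * (\<beta> * (r0/2)) < \<beta> * (r0/2)" using True r0 by simp
    then have "(9/10) * (\<beta> * (r0/2)) < width E x0 (r0/2) n" using bb(3) by linarith
    then obtain y where y: "y \<in> E \<inter> ball x0 (r0/2)" "(9/10) * (\<beta> * (r0/2)) < \<bar>inner (y - x0) n\<bar>"
      using width_point[OF r02 n1 a0] by blast
    have "inner (y - x0) n = inner (y - p) n - inner (x0 - p) n" by (simp add: inner_diff_left)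
    then have tri: "\<bar>inner (y - x0) n\<bar> \<le> \<bar>inner (y - p) n\<bar> + \<bar>inner (x0 - p) n\<bar>" by linarith
    show ?thesis
    proof (cases "\<bar>inner (x0 - p) n\<bar> \<le> \<bar>inner (y - p) n\<bar>")
      case True
      then have "9/40 * \<beta> * r0 \<le> \<bar>inner (y - p) n\<bar>" using y(2) tri by linarith
      moreover have "y \<in> E" "dist x0 y < r0/2" using y(1) by auto
      ultimately show ?thesis by (rule that[rotated -1])
    next
      case False
      then have "9/40 * \<beta> * r0 \<le> \<bar>inner (x0 - p) n\<bar>" using y(2) tri by linarith
      then show ?thesis using x0E r0 by (intro that) auto
    qed
  next
    case False
    then have "\<beta> = 0" using bb(1) by simp
    then show ?thesis using x0E r0 by (intro that[of x0]) auto
  qed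
  define h where "h = \<bar>inner (w - p) n\<bar>"
  have h32: "h \<le> 3/2 * r0"
  proof -
    have "h \<le> norm (w - p) * norm n" unfolding h_def by (rule Cauchy_Schwarz_ineq2)
    also have "\<dots> = dist w p" using n1 by (simp add: dist_norm)
    also have "dist w p \<le> dist w x0 + dist x0 p" by (rule dist_triangle)
    finally show ?thesis using w(2) psph by (simp add: dist_commute)
  qed
  have Dh: "dist p q + 2 * h\<^sup>2 / (3 * r0) \<le> dist p w + dist q w"
    using c1.excess[of h w, OF _ h32] by (simp add: h_def n_def c1.L_def)
  define D where "D = dist p w + dist q w - dist p q"
  have DD: "2 * h\<^sup>2 / (3 * r0) \<le> D" using Dh by (simp add: D_def)
  define M where "M = min (D/2) (r0/4)"
  have bound: "ennreal (dist p q - g + (M - g)/C0) \<le> H1 E" if "0 < g" "g < r0/8" for g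
    using main_bound[OF r0 C0 _ cp cq psph Lr w(1,2) that] ahl by (simp add: M_def D_def)
  show ?thesis
  proof (cases "H1 E = \<infinity>")
    case True then show ?thesis by simp
  next
    case False
    define X where "X = enn2real (H1 E)"
    have HX: "H1 E = ennreal X" using False by (simp add: X_def less_top)
    have X0: "0 \<le> X" by (simp add: X_def)
    have le: "dist p q - g + (M - g)/C0 \<le> X" if "0 < g" "g < r0/8" for g
      using bound[OF that] HX X0 by simp
    have XL: "dist p q + M/C0 \<le> X"
    proof (rule ccontr)
      assume "\<not> ?thesis"
      then have d: "dist p q + M/C0 - X > 0" by simp
      define g where "g = min (r0/16) ((dist p q + M/C0 - X)/4)"
      have g12: "0 < g" "g < r0/8" using d r0 by (auto simp: g_def)
      have g3: "g \<le> (dist p q + M/C0 - X)/4" unfolding g_def by (rule min.cobounded2)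
      note g = g12 g3
      obtain A B T where AB: "A = M/C0" "B = g/C0" "T = (M - g)/C0" by blast
      have "B \<le> g" using g(1) C0 AB(2) by (simp add: divide_le_eq)
      moreover have "T = A - B" using AB by (simp add: diff_divide_distrib)
      moreover have "dist p q - g + T \<le> X" using le[OF g(1,2)] AB(3) by simp
      moreover have "g \<le> (dist p q + A - X)/4" "0 < dist p q + A - X" using g(3) d AB(1) by simp_all
      ultimately show False by argo
    qed
    have "\<beta>\<^sup>2 \<le> 64 * C0 / r0 * (X - dist p q)"
      by (rule final_arith[OF r0 C0 bb(1,2) _ DD]) (use w(3) XL in \<open>simp_all add: h_def M_def\<close>)
    then show ?thesis by (simp add: \<beta>_def X_def)
  qed
qed


end
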